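(* Let $\lambda\in\mathbb{C}^*$, $\alpha\in\mathbb{C}$, $t\in\{1,-1\}$, and let $\pi_t=x\mathbb{C}[x]\mathbf{1}_{\bar0}\oplus\mathbb{C}[y]\mathbf{1}_{\bar1}\subseteq\mathcal{N}_t(\lambda,0)$. Then: (1) $\mathcal{N}_t(\lambda,\alpha)$ is simple if and only if $\alpha\neq0$. In addition, $\pi_t$ is the unique nonzero proper submodule of $\mathcal{N}_t(\lambda,0)$, and $\mathcal{N}_t(\lambda,0)/\pi_t\cong\mathbb{C}$ (the one-dimensional trivial module). (2) $\pi_1\cong\Pi(\mathcal{N}_{-1}(\lambda,\frac12))$ and $\pi_{-1}\cong\Pi(\mathcal{N}_1(\lambda,\frac12))$, and these are simple $\mathcal{T}$-modules.
   Context: The twisted $N=2$ superconformal algebra $\mathcal{T}$ is the Lie superalgebra over $\mathbb{C}$ with basis $\{L_m, I_r, G_p\mid m\in\mathbb{Z}, r\in\frac12+\mathbb{Z}, p\in\frac12\mathbb{Z}\}$, even part spanned by the $L_m,I_r$, odd part by the $G_p$, only nonzero brackets $[L_m,L_n]=(m-n)L_{m+n}$, $[L_m,I_r]=-rI_{m+r}$, $[L_m,G_p]=(\frac m2-p)G_{m+p}$, $[I_r,G_p]=G_{r+p}$, $[G_p,G_q]=(-1)^{2p}2L_{p+q}$ if $p+q\in\mathbb{Z}$, $[G_p,G_q]=(-1)^{2p+1}(p-q)I_{p+q}$ if $p+q\in\frac12+\mathbb{Z}$. Modules are $\mathbb{Z}_2$-graded; $\Pi$ is the parity-change functor. For $p\in\frac12\mathbb{Z}$,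 $\lambda^p$ means $(\lambda^{1/2})^{2p}$ for a fixed square root. For $\lambda\in\mathbb{C}^*,\alpha\in\mathbb{C},t=\pm1$, $\mathcal{N}_t(\lambda,\alpha)$ is the space $\mathbb{C}[x]\mathbf{1}_{\bar0}\oplus\mathbb{C}[y]\mathbf{1}_{\bar1}$ (even part $\mathbb{C}[x]\mathbf{1}_{\bar0}$, odd part $\mathbb{C}[y]\mathbf{1}_{\bar1}$; write $f(x)$ for $f(x)\mathbf{1}_{\bar0}$, $g(y)$ for $g(y)\mathbf{1}_{\bar1}$) with $L_mf(x)=\lambda^m(x+m\alpha)f(x+m)$, $L_mg(y)=\lambda^m(y+m(\alpha+\frac12))g(y+m)$, $I_rf(x)=-2t^{2r}\lambda^r\alpha f(x+r)$, $I_rg(y)=t^{2r}\lambda^r(1-2\alpha)g(y+r)$, $G_pf(x)=t^{2p}\lambda^pf(y+p)$, $G_pg(y)=(-t)^{2p}\lambda^p(x+2p\alpha)g(x+p)$, for $m\in\mathbb{Z}$, $r\in\frac12+\mathbb{Z}$, $p\in\frac12\mathbb{Z}$. *)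

theory Defs
  imports Complex_Main "HOL-Computational_Algebra.Polynomial" "HOL-Library.Product_Plus"
begin

text \<open>Basis of the twisted N=2 superconformal algebra.
  L m      stands for L_m   (m integer),
  I k      stands for I_{k/2} (only meaningful for k odd, i.e. r in 1/2 + Z),
  G k      stands for G_{k/2} (k any integer, i.e. p in (1/2)Z).\<close>
datatype tbasis = L int | I int | G int

fun valid_basis :: "tbasis \<Rightarrow> bool" where
  "valid_basis (L m) = True"
| "valid_basis (I k) = odd k"
| "valid_basis (G k) = True"

text \<open>Elements of N_t(lam,alpha) = C[x]1_0 (+) C[y]1_1 are pairs (f, g):
  f the even component (polynomial in x), g the odd component (polynomial in y).\<close>
type_synonym nvec = "complex poly \<times> complex poly"

definition shift :: "int \<Rightarrow> complex poly \<Rightarrow> complex poly" where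
  "shift k f = pcompose f [:of_int k / 2, 1:]"

definition vscale :: "complex \<Rightarrow> nvec \<Rightarrow> nvec" where
  "vscale c v = (smult c (fst v), smult c (snd v))"

text \<open>The action of N_t(lam,alpha), where mu is the fixed square root of lam,
  so that lam^(k/2) = mu^k.\<close>
fun Nact :: "complex \<Rightarrow> complex \<Rightarrow> complex \<Rightarrow> tbasis \<Rightarrow> nvec \<Rightarrow> nvec" where
  "Nact t mu alpha (L m) (f, g) =
     (smult (mu powi (2*m)) ([:of_int m * alpha, 1:] * shift (2*m) f),
      smult (mu powi (2*m)) ([:of_int m * (alpha + 1/2), 1:] * shift (2*m) g))"
| "Nact t mu alpha (I k) (f, g) =
     (smult (- 2 * t powi k * mu powi k * alpha) (shift k f),
      smult (t powi k * mu powi k * (1 - 2 * alpha)) (shift k g))"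
| "Nact t mu alpha (G k) (f, g) =
     (smult ((- t) powi k * mu powi k) ([:of_int k * alpha, 1:] * shift k g),
      smult (t powi k * mu powi k) (shift k f))"

definition is_submod :: "(tbasis \<Rightarrow> nvec \<Rightarrow> nvec) \<Rightarrow> nvec set \<Rightarrow> bool" where
  "is_submod act W \<longleftrightarrow>
     0 \<in> W \<and> (\<forall>v\<in>W. \<forall>w\<in>W. v + w \<in> W) \<and> (\<forall>c. \<forall>v\<in>W. vscale c v \<in> W)
     \<and> (\<forall>b. \<forall>v\<in>W. valid_basis b \<longrightarrow> act b v \<in> W)
     \<and> (\<forall>f g. (f, g) \<in> W \<longrightarrow> (f, 0) \<in> W \<and> (0, g) \<in> W)"

definition simple_submod :: "(tbasis \<Rightarrow> nvec \<Rightarrow> nvec) \<Rightarrow> nvec set \<Rightarrow> bool" where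
  "simple_submod act V \<longleftrightarrow> is_submod act V \<and> V \<noteq> {0}
     \<and> (\<forall>W. is_submod act W \<and> W \<subseteq> V \<longrightarrow> W = {0} \<or> W = V)"

definition simple_mod :: "(tbasis \<Rightarrow> nvec \<Rightarrow> nvec) \<Rightarrow> bool" where
  "simple_mod act \<longleftrightarrow> simple_submod act UNIV"

definition pi_sub :: "nvec set" where
  "pi_sub = {(f, g). coeff f 0 = 0}"

text \<open>M/W is isomorphic to the one-dimensional trivial module C:
  there is a linear surjection onto C with kernel W, intertwining the action
  with the trivial (zero) action.\<close>
definition quot_is_trivial_C :: "(tbasis \<Rightarrow> nvec \<Rightarrow> nvec) \<Rightarrow> nvec set \<Rightarrow> bool" where
  "quot_is_trivial_C act W \<longleftrightarrow> (\<exists>\<phi> :: nvec \<Rightarrow> complex.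
     (\<forall>v w. \<phi> (v + w) = \<phi> v + \<phi> w) \<and> (\<forall>c v. \<phi> (vscale c v) = c * \<phi> v)
     \<and> surj \<phi> \<and> {v. \<phi> v = 0} = W
     \<and> (\<forall>b v. valid_basis b \<longrightarrow> \<phi> (act b v) = 0))"

text \<open>The submodule V of (the module with action) act1 is isomorphic to
  Pi(M2), M2 the module with action act2: an even isomorphism V -> Pi(M2),
  i.e. a linear bijection V -> M2 commuting with the action and
  interchanging parity.\<close>
definition parity_iso ::
  "(tbasis \<Rightarrow> nvec \<Rightarrow> nvec) \<Rightarrow> nvec set \<Rightarrow> (tbasis \<Rightarrow> nvec \<Rightarrow> nvec) \<Rightarrow> bool" where
  "parity_iso act1 V act2 \<longleftrightarrow> (\<exists>\<phi> :: nvec \<Rightarrow> nvec.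
     (\<forall>v\<in>V. \<forall>w\<in>V. \<phi> (v + w) = \<phi> v + \<phi> w) \<and> (\<forall>c. \<forall>v\<in>V. \<phi> (vscale c v) = vscale c (\<phi> v))
     \<and> bij_betw \<phi> V UNIV
     \<and> (\<forall>b. \<forall>v\<in>V. valid_basis b \<longrightarrow> \<phi> (act1 b v) = act2 b (\<phi> v))
     \<and> (\<forall>f. (f, 0) \<in> V \<longrightarrow> fst (\<phi> (f, 0)) = 0)
     \<and> (\<forall>g. (0, g) \<in> V \<longrightarrow> snd (\<phi> (0, g)) = 0))"

end

theory Submission imports Defs begin

lemma shift0[simp]: "shift 0 f = f" unfolding shift_def by simp
lemma shift_zero[simp]: "shift k 0 = 0" unfolding shift_def by simp
lemma shift_x: "shift k ([:0,1:]*h) = [:of_int k/2,1:] * shift k h"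
  unfolding shift_def by (simp add: pcompose_mult pcompose_pCons)

lemma shift1_ne:
  assumes "degree f > 0" shows "shift 1 f \<noteq> f"
proof
  assume eq: "shift 1 f = f"
  have step: "poly f (z + 1/2) = poly f z" for z
  proof -
    have "poly (shift 1 f) z = poly f z" using eq by simp
    thus ?thesis unfolding shift_def by (simp add: poly_pcompose add.commute)
  qed
  have all: "poly f (of_nat n / 2) = poly f 0" for n :: nat
  proof (induct n)
    case (Suc n)
    have "of_nat (Suc n) / 2 = (of_nat n / 2 :: complex) + 1/2" by (simp add: field_simps)
    then show ?case using step[of "of_nat n / 2"] Suc by (simp only:)
  qed simp
  define p where "p = f - [:poly f 0:]"
  have "p \<noteq> 0"
  proof
    assume "p = 0" then have "f = [:poly f 0:]" unfolding p_def by simp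
    then have "degree f = 0" by (metis degree_pCons_0)
    with assms show False by simp
  qed
  then have fin: "finite {z. poly p z = 0}" by (rule poly_roots_finite)
  have "range (\<lambda>n::nat. (of_nat n / 2 :: complex)) \<subseteq> {z. poly p z = 0}"
    using all by (auto simp: p_def)
  moreover have "infinite (range (\<lambda>n::nat. (of_nat n / 2 :: complex)))"
    by (rule range_inj_infinite) (auto simp: inj_on_def)
  ultimately show False using fin finite_subset by blast
qed

lemma shift1_deg:
  assumes "degree f > 0" shows "degree (shift 1 f - f) < degree f"
proof -
  let ?n = "degree f"
  have d: "degree (shift 1 f) = ?n" unfolding shift_def by (simp add: degree_pcompose)
  have l: "coeff (shift 1 f) ?n = lead_coeff f" 
    using lead_coeff_comp[of "[:1/2,1:]" f] d unfolding shift_def by simp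
  have c: "coeff (shift 1 f - f) ?n = 0" using l by simp
  have le: "degree (shift 1 f - f) \<le> ?n" using degree_diff_le[of "shift 1 f" ?n f] d by simp
  show ?thesis
  proof (rule ccontr)
    assume "\<not> ?thesis"
    then have eqd: "degree (shift 1 f - f) = ?n" using le by simp
    then have "shift 1 f - f \<noteq> 0" using assms by auto
    then have "lead_coeff (shift 1 f - f) \<noteq> 0" by (rule leading_coeff_neq_0)
    with c eqd show False by metis
  qed
qed

lemma fill_base:
  fixes S :: "complex poly set"
  assumes add: "\<And>f g. f\<in>S \<Longrightarrow> g\<in>S \<Longrightarrow> f+g\<in>S" and sm: "\<And>c f. f\<in>S \<Longrightarrow> smult c f \<in> S"
    and mx: "\<And>f. f\<in>S \<Longrightarrow> [:0,1:]*f \<in> S" and one: "1 \<in> S"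
  shows "p \<in> S"
proof (induct p rule: pCons_induct)
  case 0
  then show ?case using sm[OF one, of 0] by simp
next
  case (pCons a p)
  have "pCons a p = smult a 1 + [:0,1:]*p" by simp
  then show ?case using add[OF sm[OF one] mx[OF pCons(2)]] by metis
qed

lemma fill:
  fixes S :: "complex poly set"
  assumes add: "\<And>f g. f\<in>S \<Longrightarrow> g\<in>S \<Longrightarrow> f+g\<in>S" and sm: "\<And>c f. f\<in>S \<Longrightarrow> smult c f \<in> S"
    and mx: "\<And>f. f\<in>S \<Longrightarrow> [:0,1:]*f \<in> S" and sh: "\<And>f. f\<in>S \<Longrightarrow> shift 1 f \<in> S"
    and f: "f \<in> S" "f \<noteq> 0"
  shows "p \<in> S"
proof -
  have "\<forall>f. degree f = n \<longrightarrow> f \<in> S \<longrightarrow> f \<noteq> 0 \<longrightarrow> 1 \<in> S" for n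
  proof (induct n rule: less_induct)
    case (less n)
    show ?case
    proof (intro allI impI)
      fix f assume df: "degree f = n" and fS: "f \<in> S" and f0: "f \<noteq> 0"
      show "1 \<in> S"
      proof (cases "n = 0")
        case True
        then obtain c where fc: "f = [:c:]" using df by (metis degree_eq_zeroE)
        then have "c \<noteq> 0" using f0 by simp
        then have "smult (1/c) f = 1" using fc by (simp add: one_pCons)
        then show ?thesis using sm[OF fS] by metis
      next
        case False
        then have dp: "degree f > 0" using df by simp
        have "shift 1 f - f = shift 1 f + smult (-1) f" by simp
        then have "shift 1 f - f \<in> S" using add[OF sh[OF fS] sm[OF fS]] by metis
        moreover have "shift 1 f - f \<noteq> 0" using shift1_ne[OF dp] by simp
        moreover have "degree (shift 1 f - f) < n" using shift1_deg[OF dp] df by simp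
        ultimately show ?thesis using less by blast
      qed
    qed
  qed
  then have "1 \<in> S" using f by blast
  then show ?thesis using fill_base[OF add sm mx] by blast
qed


lemma zero_pair: "(0::nvec) = (0,0)" by (simp add: zero_prod_def)

lemma act_L0: "Nact t mu a (L 0) (f,g) = ([:0,1:]*f, [:0,1:]*g)" by simp
lemma act_G0: "Nact t mu a (G 0) (f,g) = ([:0,1:]*g, f)" by simp
lemma act_I1: "Nact t mu a (I 1) (f,g) = (smult (-2*t*mu*a) (shift 1 f), smult (t*mu*(1-2*a)) (shift 1 g))"
  by simp

lemma submod_parts:
  assumes "is_submod act W"
  shows "(0,0) \<in> W" "\<And>v w. v\<in>W \<Longrightarrow> w\<in>W \<Longrightarrow> v+w\<in>W" "\<And>c v. v\<in>W \<Longrightarrow> vscale c v \<in> W"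
    "\<And>b v. v\<in>W \<Longrightarrow> valid_basis b \<Longrightarrow> act b v \<in> W"
    "\<And>f g. (f,g)\<in>W \<Longrightarrow> (f,0)\<in>W" "\<And>f g. (f,g)\<in>W \<Longrightarrow> (0,g)\<in>W"
  using assms unfolding is_submod_def zero_pair by blast+

lemma nonzero_elem:
  assumes "W \<noteq> {0}" "is_submod act W"
  obtains f g where "(f,g) \<in> W" "f \<noteq> 0 \<or> g \<noteq> 0"
proof -
  have "\<exists>v\<in>W. v \<noteq> 0" using assms(1) submod_parts(1)[OF assms(2)] zero_pair by auto
  then obtain v where "v \<in> W" "v \<noteq> 0" by blast
  then show ?thesis using that by (cases v) (auto simp: zero_pair)
qed

lemma simple_alpha:
  assumes t: "t \<noteq> 0" and mu: "mu \<noteq> 0" and al: "alpha \<noteq> 0"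
    and W: "is_submod (Nact t mu alpha) W" and W0: "W \<noteq> {0}"
  shows "W = UNIV"
proof -
  note P = submod_parts[OF W]
  let ?S = "{f. (f,0) \<in> W}"
  have add: "f+g \<in> ?S" if "f \<in> ?S" "g \<in> ?S" for f g using P(2)[of "(f,0)" "(g,0)"] that by simp
  have sm: "smult c f \<in> ?S" if "f \<in> ?S" for c f using P(3)[of "(f,0)" c] that by (simp add: vscale_def)
  have mx: "[:0,1:]*f \<in> ?S" if "f \<in> ?S" for f using P(4)[of "(f,0)" "L 0"] that by simp
  have sh: "shift 1 f \<in> ?S" if "f \<in> ?S" for f
  proof -
    have "Nact t mu alpha (I 1) (f,0) \<in> W" using P(4)[of "(f,0)" "I 1"] that by simp
    then have "(smult (-2*t*mu*alpha) (shift 1 f), 0) \<in> W" by (simp only: act_I1) simp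
    from P(3)[OF this, of "1/(-2*t*mu*alpha)"] show ?thesis using t mu al by (simp add: vscale_def)
  qed
  obtain f g where fg: "(f,g) \<in> W" "f \<noteq> 0 \<or> g \<noteq> 0" using nonzero_elem[OF W0 W] by blast
  obtain h where h: "h \<in> ?S" "h \<noteq> 0"
  proof (cases "f = 0")
    case False then show ?thesis using that P(5)[OF fg(1)] by simp
  next
    case True
    then have "g \<noteq> 0" using fg by simp
    moreover have "([:0,1:]*g, 0) \<in> W" using P(4)[OF P(6)[OF fg(1)], of "G 0"] by simp
    ultimately show ?thesis using that by simp
  qed
  have all: "p \<in> ?S" for p by (rule fill[OF add sm mx sh h])
  have "(p,q) \<in> W" for p q
  proof -
    have "(0,q) \<in> W" using P(4)[OF all[of q, simplified], of "G 0"] by simp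
    from P(2)[OF all[of p, simplified] this] show ?thesis by simp
  qed
  then show ?thesis by auto
qed

lemma uniq0:
  assumes t: "t \<noteq> 0" and mu: "mu \<noteq> 0"
    and W: "is_submod (Nact t mu 0) W" and W0: "W \<noteq> {0}"
  shows "W = pi_sub \<or> W = UNIV"
proof -
  note P = submod_parts[OF W]
  let ?S = "{g. (0,g) \<in> W}"
  have add: "f+g \<in> ?S" if "f \<in> ?S" "g \<in> ?S" for f g using P(2)[of "(0,f)" "(0,g)"] that by simp
  have sm: "smult c f \<in> ?S" if "f \<in> ?S" for c f using P(3)[of "(0,f)" c] that by (simp add: vscale_def)
  have mx: "[:0,1:]*f \<in> ?S" if "f \<in> ?S" for f using P(4)[of "(0,f)" "L 0"] that by simp
  have sh: "shift 1 f \<in> ?S" if "f \<in> ?S" for f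
  proof -
    have "Nact t mu 0 (I 1) (0,f) \<in> W" using P(4)[of "(0,f)" "I 1"] that by simp
    then have "(0, smult (t*mu) (shift 1 f)) \<in> W" by (simp only: act_I1) simp
    from P(3)[OF this, of "1/(t*mu)"] show ?thesis using t mu by (simp add: vscale_def)
  qed
  obtain f g where fg: "(f,g) \<in> W" "f \<noteq> 0 \<or> g \<noteq> 0" using nonzero_elem[OF W0 W] by blast
  obtain h where h: "h \<in> ?S" "h \<noteq> 0"
  proof (cases "g = 0")
    case False then show ?thesis using that P(6)[OF fg(1)] by simp
  next
    case True
    then have "f \<noteq> 0" using fg by simp
    moreover have "(0, f) \<in> W" using P(4)[OF P(5)[OF fg(1)], of "G 0"] by simp
    ultimately show ?thesis using that by simp
  qed
  have all: "p \<in> ?S" for p by (rule fill[OF add sm mx sh h])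
  have xq: "([:0,1:]*q, 0) \<in> W" for q using P(4)[OF all[of q, simplified], of "G 0"] by simp
  have sub: "pi_sub \<subseteq> W"
  proof
    fix v assume "v \<in> pi_sub"
    then obtain f g where v: "v = (f,g)" "coeff f 0 = 0" unfolding pi_sub_def by auto
    obtain a q where "f = pCons a q" by (rule pCons_cases)
    with v have "f = [:0,1:]*q" by simp
    then show "v \<in> W" using P(2)[OF xq[of q] all[of g, simplified]] v by simp
  qed
  show ?thesis
  proof (cases "W \<subseteq> pi_sub")
    case True then show ?thesis using sub by blast
  next
    case False
    then obtain f g where fg: "(f,g) \<in> W" "coeff f 0 \<noteq> 0" unfolding pi_sub_def by auto
    obtain a q where fa: "f = pCons a q" by (rule pCons_cases)
    then have a: "a \<noteq> 0" using fg by simp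
    have "(f,0) + vscale (-1) ([:0,1:]*q, 0) \<in> W" using P(2)[OF P(5)[OF fg(1)] P(3)[OF xq[of q]]] .
    then have "([:a:], 0) \<in> W" using fa by (simp add: vscale_def)
    from P(3)[OF this, of "1/a"] have one: "(1, 0) \<in> W" using a by (simp add: vscale_def one_pCons)
    let ?T = "{f. (f,0) \<in> W}"
    have "p \<in> ?T" for p
    proof (rule fill_base)
      show "f+g \<in> ?T" if "f \<in> ?T" "g \<in> ?T" for f g using P(2)[of "(f,0)" "(g,0)"] that by simp
      show "smult c f \<in> ?T" if "f \<in> ?T" for c f using P(3)[of "(f,0)" c] that by (simp add: vscale_def)
      show "[:0,1:]*f \<in> ?T" if "f \<in> ?T" for f using P(4)[of "(f,0)" "L 0"] that by simp
    qed (use one in simp)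
    then have "(p,q) \<in> W" for p q using P(2)[OF _ all[of q, simplified], of "(p,0)"] by simp
    then show ?thesis by auto
  qed
qed


lemma pi_submod: "is_submod (Nact t mu 0) pi_sub"
  unfolding is_submod_def pi_sub_def zero_pair
proof (intro conjI allI ballI impI)
  fix b and v :: nvec assume "v \<in> {(f, g). coeff f 0 = 0}" "valid_basis b"
  then show "Nact t mu 0 b v \<in> {(f, g). coeff f 0 = 0}"
    by (cases b; cases v) (auto simp: coeff_pCons_0)
qed (auto simp: vscale_def)

definition phi :: "nvec \<Rightarrow> nvec" where "phi v = (snd v, fst v div [:0,1:])"

lemma xdiv[simp]: "([:0,1:] * h) div [:0,1:] = (h :: complex poly)"
  by (rule nonzero_mult_div_cancel_left) simp

lemma xdiv2[simp]: "(pCons 0 h) div [:0,1:] = (h :: complex poly)"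
  using xdiv[of h] by simp

lemma shift_x2: "shift k (pCons 0 h) = [:of_int k/2,1:] * shift k h"
  using shift_x[of k h] by simp

lemma pi_form: "v \<in> pi_sub \<Longrightarrow> \<exists>h g. v = ([:0,1:]*h, g)"
proof -
  assume "v \<in> pi_sub"
  then obtain f g where v: "v = (f,g)" "coeff f 0 = 0" unfolding pi_sub_def by auto
  obtain a q where "f = pCons a q" by (rule pCons_cases)
  with v show ?thesis by auto
qed

lemma iso_comm:
  assumes "valid_basis b"
  shows "phi (Nact t0 mu 0 b ([:0,1:]*h, g)) = Nact (-t0) mu (1/2) b (phi ([:0,1:]*h, g))"
  using assms
proof (cases b)
  case (L m)
  have e: "(of_int (2*m) / 2 :: complex) = of_int m" by simp
  show ?thesis using L by (simp add: phi_def shift_x2 e)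
next
  case (I k)
  then show ?thesis using assms by (simp add: phi_def)
next
  case (G k)
  then show ?thesis by (simp add: phi_def shift_x2)
qed


lemma piso: "parity_iso (Nact t0 mu 0) pi_sub (Nact (-t0) mu (1/2))"
  unfolding parity_iso_def
proof (intro exI[of _ phi] conjI ballI allI impI)
  fix v w assume "v \<in> pi_sub" "w \<in> pi_sub"
  then obtain h1 g1 h2 g2 where "v = ([:0,1:]*h1, g1)" "w = ([:0,1:]*h2, g2)" using pi_form by blast
  then show "phi (v + w) = phi v + phi w" by (simp add: phi_def)
next
  fix c v assume "v \<in> pi_sub"
  then show "phi (vscale c v) = vscale c (phi v)" using pi_form by (auto simp: phi_def vscale_def div_smult_left)
next
  show "bij_betw phi pi_sub UNIV"
  proof (rule bij_betw_byWitness[where f'="\<lambda>(a,b). (pCons 0 b, a)"])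
    show "\<forall>a\<in>pi_sub. (\<lambda>(a, b). (pCons 0 b, a)) (phi a) = a"
    proof
      fix v assume "v \<in> pi_sub"
      then obtain h g where "v = ([:0,1:]*h, g)" using pi_form by blast
      then show "(\<lambda>(a, b). (pCons 0 b, a)) (phi v) = v" by (simp add: phi_def)
    qed
  qed (auto simp: phi_def pi_sub_def)
next
  fix b v assume "v \<in> pi_sub" "valid_basis b"
  then show "phi (Nact t0 mu 0 b v) = Nact (- t0) mu (1 / 2) b (phi v)"
    using pi_form iso_comm by blast
qed (auto simp: phi_def)


lemma quot: "quot_is_trivial_C (Nact t mu 0) pi_sub"
  unfolding quot_is_trivial_C_def
proof (intro exI[of _ "\<lambda>v. coeff (fst v) 0"] conjI allI impI)
  show "surj (\<lambda>v::nvec. coeff (fst v) 0)" by (rule surjI[of _ "\<lambda>c. ([:c:],0)"]) simp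
  show "{v. coeff (fst v) 0 = 0} = pi_sub" by (auto simp: pi_sub_def)
  fix b and v :: nvec assume "valid_basis b"
  then show "coeff (fst (Nact t mu 0 b v)) 0 = 0" by (cases b; cases v) auto
qed (auto simp: vscale_def)

lemma not_simple0:
  assumes "simple_mod (Nact t mu 0)" shows False
proof -
  have "pi_sub = {0} \<or> pi_sub = UNIV" using assms pi_submod unfolding simple_mod_def simple_submod_def by blast
  moreover have "(0, 1) \<in> pi_sub" "(1, 0) \<notin> pi_sub" by (auto simp: pi_sub_def)
  ultimately show False by (auto simp: zero_pair)
qed

lemma pi_ne: "pi_sub \<noteq> {0}" "pi_sub \<noteq> UNIV"
proof -
  have "(0, 1) \<in> pi_sub" "(1, 0) \<notin> pi_sub" by (auto simp: pi_sub_def)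
  then show "pi_sub \<noteq> {0}" "pi_sub \<noteq> UNIV" by (auto simp: zero_pair)
qed

lemma simple_pi:
  assumes "t \<noteq> 0" "mu \<noteq> 0" shows "simple_submod (Nact t mu 0) pi_sub"
  unfolding simple_submod_def
  using pi_submod pi_ne uniq0[OF assms] by blast

theorem theorem2p10:
  fixes lam mu alpha t :: complex
  assumes "lam \<noteq> 0" and "mu ^ 2 = lam" and "t = 1 \<or> t = -1"
  shows "(simple_mod (Nact t mu alpha) \<longleftrightarrow> alpha \<noteq> 0)
    \<and> is_submod (Nact t mu 0) pi_sub \<and> pi_sub \<noteq> {0} \<and> pi_sub \<noteq> UNIV
    \<and> (\<forall>W. is_submod (Nact t mu 0) W \<and> W \<noteq> {0} \<and> W \<noteq> UNIV \<longrightarrow> W = pi_sub)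
    \<and> quot_is_trivial_C (Nact t mu 0) pi_sub
    \<and> parity_iso (Nact 1 mu 0) pi_sub (Nact (-1) mu (1/2))
    \<and> parity_iso (Nact (-1) mu 0) pi_sub (Nact 1 mu (1/2))
    \<and> simple_submod (Nact 1 mu 0) pi_sub
    \<and> simple_submod (Nact (-1) mu 0) pi_sub"
proof -
  have mu: "mu \<noteq> 0" using assms(1,2) by auto
  have t: "t \<noteq> 0" using assms(3) by auto
  have s1: "simple_mod (Nact t mu alpha) \<longleftrightarrow> alpha \<noteq> 0"
  proof
    assume "simple_mod (Nact t mu alpha)"
    then show "alpha \<noteq> 0" using not_simple0 by blast
  next
    assume a: "alpha \<noteq> 0"
    have "is_submod (Nact t mu alpha) UNIV" unfolding is_submod_def by simp
    moreover have "(UNIV :: nvec set) \<noteq> {0}"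
    proof
      assume "(UNIV :: nvec set) = {0}"
      then have "((1,0)::nvec) \<in> {0}" by blast
      then show False by (simp add: zero_pair)
    qed
    ultimately show "simple_mod (Nact t mu alpha)"
      unfolding simple_mod_def simple_submod_def using simple_alpha[OF t mu a] by blast
  qed
  have p2: "parity_iso (Nact 1 mu 0) pi_sub (Nact (-1) mu (1/2))" using piso[of 1 mu] by simp
  have p3: "parity_iso (Nact (-1) mu 0) pi_sub (Nact 1 mu (1/2))" using piso[of "-1" mu] by simp
  show ?thesis
    using s1 pi_submod pi_ne uniq0[OF t mu] quot p2 p3 simple_pi[OF _ mu, of 1] simple_pi[OF _ mu, of "-1"]
    by auto
qed

end
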